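(* Let $\mathcal D$ be a geometric category in which every admissible morphism is a monomorphism, and let $f\colon\mathcal C\to\mathcal D$ be an admissibility fibration. Call a morphism of $\mathcal C$ admissible if it is $f$-cartesian and its image under $f$ is admissible. Then for every $c\in\mathcal C$, $f$ establishes a bijection from the poset of admissible subobjects of $c$ to the poset of admissible subobjects of $d=f(c)$ (sending the subobject represented by $r\colon c_1\to c$ to the one represented by $f(r)$).
   Context: An admissibility structure on a category is a subcategory containing all identities whose morphisms (called admissible) are closed under retracts, satisfy: if $g$ and $g\circ f$ are admissible then $f$ is, and whose base changes along arbitrary morphisms exist and are admissible; a geometric category is a category with an admissibility structure. A functor $f\colon\mathcal C\to\mathcal D$ to a geometric category is an admissibility fibration if for each $y\in\mathcal C$ and admissible $b\colon z\to f(y)$ there exists an $f$-cartesian $a\colon x\to y$ with $f(a)=b$. An admissible subobject of an object is a subobject represented by an admissible monomorphism into it, ordered by factorization. *)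

theory Defs
  imports Main
begin

record ('o,'m) cat =
  cObj  :: "'o set"
  cArr  :: "'m set"
  cDom  :: "'m \<Rightarrow> 'o"
  cCod  :: "'m \<Rightarrow> 'o"
  cId   :: "'o \<Rightarrow> 'm"
  cComp :: "'m \<Rightarrow> 'm \<Rightarrow> 'm"   (* cComp C g f = g \<circ> f, defined when cCod f = cDom g *)

definition hom :: "('o,'m) cat \<Rightarrow> 'o \<Rightarrow> 'o \<Rightarrow> 'm \<Rightarrow> bool" where
  "hom C x y f \<longleftrightarrow> f \<in> cArr C \<and> cDom C f = x \<and> cCod C f = y"

definition is_category :: "('o,'m) cat \<Rightarrow> bool" where
  "is_category C \<longleftrightarrow>
     (\<forall>f\<in>cArr C. cDom C f \<in> cObj C \<and> cCod C f \<in> cObj C) \<and>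
     (\<forall>x\<in>cObj C. hom C x x (cId C x)) \<and>
     (\<forall>f g. f \<in> cArr C \<and> g \<in> cArr C \<and> cCod C f = cDom C g \<longrightarrow>
        hom C (cDom C f) (cCod C g) (cComp C g f)) \<and>
     (\<forall>f\<in>cArr C. cComp C f (cId C (cDom C f)) = f \<and> cComp C (cId C (cCod C f)) f = f) \<and>
     (\<forall>f g h. f \<in> cArr C \<and> g \<in> cArr C \<and> h \<in> cArr C \<and> cCod C f = cDom C g \<and> cCod C g = cDom C h
        \<longrightarrow> cComp C h (cComp C g f) = cComp C (cComp C h g) f)"

definition mono :: "('o,'m) cat \<Rightarrow> 'm \<Rightarrow> bool" where
  "mono C m \<longleftrightarrow> m \<in> cArr C \<and>
     (\<forall>g h. g \<in> cArr C \<and> h \<in> cArr C \<and> cCod C g = cDom C m \<and> cCod C h = cDom C m \<and>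
        cDom C g = cDom C h \<and> cComp C m g = cComp C m h \<longrightarrow> g = h)"

text \<open>Pullback square: a' : x' \<rightarrow> y' is the base change of a : x \<rightarrow> y along g : y' \<rightarrow> y,
  with projection g' : x' \<rightarrow> x, so that a \<circ> g' = g \<circ> a'.\<close>
definition is_pullback :: "('o,'m) cat \<Rightarrow> 'm \<Rightarrow> 'm \<Rightarrow> 'm \<Rightarrow> 'm \<Rightarrow> bool" where
  "is_pullback C a g a' g' \<longleftrightarrow>
     a \<in> cArr C \<and> g \<in> cArr C \<and> cCod C g = cCod C a \<and>
     hom C (cDom C a') (cDom C g) a' \<and> hom C (cDom C a') (cDom C a) g' \<and>
     cComp C a g' = cComp C g a' \<and>
     (\<forall>u v. u \<in> cArr C \<and> v \<in> cArr C \<and> cDom C u = cDom C v \<and> cCod C u = cDom C a \<and>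
        cCod C v = cDom C g \<and> cComp C a u = cComp C g v \<longrightarrow>
        (\<exists>!t. hom C (cDom C u) (cDom C a') t \<and> cComp C g' t = u \<and> cComp C a' t = v))"

definition is_retract_of :: "('o,'m) cat \<Rightarrow> 'm \<Rightarrow> 'm \<Rightarrow> bool" where
  "is_retract_of C f g \<longleftrightarrow> f \<in> cArr C \<and> g \<in> cArr C \<and>
     (\<exists>i r j s. hom C (cDom C f) (cDom C g) i \<and> hom C (cDom C g) (cDom C f) r \<and>
        hom C (cCod C f) (cCod C g) j \<and> hom C (cCod C g) (cCod C f) s \<and>
        cComp C r i = cId C (cDom C f) \<and> cComp C s j = cId C (cCod C f) \<and>
        cComp C g i = cComp C j f \<and> cComp C f r = cComp C s g)"

definition admissibility_structure :: "('o,'m) cat \<Rightarrow> 'm set \<Rightarrow> bool" where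
  "admissibility_structure C A \<longleftrightarrow>
     A \<subseteq> cArr C \<and>
     (\<forall>x\<in>cObj C. cId C x \<in> A) \<and>
     (\<forall>f g. f \<in> A \<and> g \<in> A \<and> cCod C f = cDom C g \<longrightarrow> cComp C g f \<in> A) \<and>
     (\<forall>f g. is_retract_of C f g \<and> g \<in> A \<longrightarrow> f \<in> A) \<and>
     (\<forall>f g. f \<in> cArr C \<and> g \<in> A \<and> cCod C f = cDom C g \<and> cComp C g f \<in> A \<longrightarrow> f \<in> A) \<and>
     (\<forall>a\<in>A. \<forall>g\<in>cArr C. cCod C g = cCod C a \<longrightarrow>
        (\<exists>a' g'. is_pullback C a g a' g') \<and> (\<forall>a' g'. is_pullback C a g a' g' \<longrightarrow> a' \<in> A))"

definition is_functor :: "('o,'m) cat \<Rightarrow> ('p,'n) cat \<Rightarrow> ('o \<Rightarrow> 'p) \<Rightarrow> ('m \<Rightarrow> 'n) \<Rightarrow> bool" where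
  "is_functor C D Fo Fm \<longleftrightarrow>
     (\<forall>x\<in>cObj C. Fo x \<in> cObj D) \<and>
     (\<forall>f\<in>cArr C. hom D (Fo (cDom C f)) (Fo (cCod C f)) (Fm f)) \<and>
     (\<forall>x\<in>cObj C. Fm (cId C x) = cId D (Fo x)) \<and>
     (\<forall>f g. f \<in> cArr C \<and> g \<in> cArr C \<and> cCod C f = cDom C g \<longrightarrow>
        Fm (cComp C g f) = cComp D (Fm g) (Fm f))"

definition cartesian :: "('o,'m) cat \<Rightarrow> ('p,'n) cat \<Rightarrow> ('o \<Rightarrow> 'p) \<Rightarrow> ('m \<Rightarrow> 'n) \<Rightarrow> 'm \<Rightarrow> bool" where
  "cartesian C D Fo Fm a \<longleftrightarrow> a \<in> cArr C \<and>
     (\<forall>a' h. a' \<in> cArr C \<and> cCod C a' = cCod C a \<and>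
        hom D (Fo (cDom C a')) (Fo (cDom C a)) h \<and> cComp D (Fm a) h = Fm a' \<longrightarrow>
        (\<exists>!k. hom C (cDom C a') (cDom C a) k \<and> cComp C a k = a' \<and> Fm k = h))"

definition admissibility_fibration ::
  "('o,'m) cat \<Rightarrow> ('p,'n) cat \<Rightarrow> 'n set \<Rightarrow> ('o \<Rightarrow> 'p) \<Rightarrow> ('m \<Rightarrow> 'n) \<Rightarrow> bool" where
  "admissibility_fibration C D AD Fo Fm \<longleftrightarrow> is_functor C D Fo Fm \<and>
     (\<forall>y\<in>cObj C. \<forall>b\<in>AD. cCod D b = Fo y \<longrightarrow>
        (\<exists>a. cartesian C D Fo Fm a \<and> cCod C a = y \<and> Fm a = b))"

definition induced_admissible :: "('o,'m) cat \<Rightarrow> ('p,'n) cat \<Rightarrow> 'n set \<Rightarrow> ('o \<Rightarrow> 'p) \<Rightarrow> ('m \<Rightarrow> 'n) \<Rightarrow> 'm set" where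
  "induced_admissible C D AD Fo Fm = {a. cartesian C D Fo Fm a \<and> Fm a \<in> AD}"

definition adm_monos :: "('o,'m) cat \<Rightarrow> 'm set \<Rightarrow> 'o \<Rightarrow> 'm set" where
  "adm_monos C A c = {r. r \<in> A \<and> mono C r \<and> cCod C r = c}"

definition factors_through :: "('o,'m) cat \<Rightarrow> 'm \<Rightarrow> 'm \<Rightarrow> bool" where
  "factors_through C r r' \<longleftrightarrow> (\<exists>k. hom C (cDom C r) (cDom C r') k \<and> cComp C r' k = r)"

text \<open>The subobject represented by r: its class of admissible monos with the same codomain.\<close>
definition subobj_class :: "('o,'m) cat \<Rightarrow> 'm set \<Rightarrow> 'o \<Rightarrow> 'm \<Rightarrow> 'm set" where
  "subobj_class C A c r =
     {r' \<in> adm_monos C A c. factors_through C r r' \<and> factors_through C r' r}"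

definition adm_subobjects :: "('o,'m) cat \<Rightarrow> 'm set \<Rightarrow> 'o \<Rightarrow> 'm set set" where
  "adm_subobjects C A c = subobj_class C A c ` adm_monos C A c"

end

theory Submission
  imports Defs
begin

lemma ft_refl:
  assumes "is_category C" "r \<in> cArr C"
  shows "factors_through C r r"
proof -
  have d: "cDom C r \<in> cObj C" using assms unfolding is_category_def by blast
  have "hom C (cDom C r) (cDom C r) (cId C (cDom C r))" using assms d unfolding is_category_def by blast
  moreover have "cComp C r (cId C (cDom C r)) = r" using assms unfolding is_category_def by blast
  ultimately show ?thesis unfolding factors_through_def by blast
qed

lemma comp_hom:
  assumes "is_category C" "f \<in> cArr C" "g \<in> cArr C" "cCod C f = cDom C g"
  shows "hom C (cDom C f) (cCod C g) (cComp C g f)"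
  using assms unfolding is_category_def by blast

lemma cat_assoc:
  assumes "is_category C" "f \<in> cArr C" "g \<in> cArr C" "h \<in> cArr C" "cCod C f = cDom C g" "cCod C g = cDom C h"
  shows "cComp C h (cComp C g f) = cComp C (cComp C h g) f"
  using assms unfolding is_category_def by blast

lemma ft_trans:
  assumes "is_category C" "r \<in> cArr C" "r' \<in> cArr C" "r'' \<in> cArr C"
    "factors_through C r r'" "factors_through C r' r''"
  shows "factors_through C r r''"
proof -
  obtain k where k: "hom C (cDom C r) (cDom C r') k" "cComp C r' k = r"
    using assms(5) unfolding factors_through_def by blast
  obtain k' where k': "hom C (cDom C r') (cDom C r'') k'" "cComp C r'' k' = r'"
    using assms(6) unfolding factors_through_def by blast
  have ka: "k \<in> cArr C" "cCod C k = cDom C r'" "cDom C k = cDom C r" using k unfolding hom_def by auto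
  have ka': "k' \<in> cArr C" "cCod C k' = cDom C r''" "cDom C k' = cDom C r'" using k' unfolding hom_def by auto
  have h: "hom C (cDom C r) (cDom C r'') (cComp C k' k)"
    using comp_hom[OF assms(1) ka(1) ka'(1)] ka ka' by simp
  have "cComp C r'' (cComp C k' k) = cComp C (cComp C r'' k') k"
    using cat_assoc[OF assms(1) ka(1) ka'(1) assms(4)] ka ka' by simp
  then show ?thesis using h k k' unfolding factors_through_def by auto
qed

lemma am_arr: "r \<in> adm_monos C A c \<Longrightarrow> r \<in> cArr C \<and> r \<in> A \<and> cCod C r = c"
  unfolding adm_monos_def mono_def by auto

lemma class_self:
  assumes "is_category C" "r \<in> adm_monos C A c"
  shows "r \<in> subobj_class C A c r"
proof -
  have "r \<in> cArr C" using am_arr[OF assms(2)] by blast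
  then have "factors_through C r r" using ft_refl[OF assms(1)] by blast
  then show ?thesis using assms(2) unfolding subobj_class_def by blast
qed

lemma class_eq:
  assumes "is_category C" "r1 \<in> adm_monos C A c" "r2 \<in> adm_monos C A c"
    "factors_through C r1 r2" "factors_through C r2 r1"
  shows "subobj_class C A c r1 = subobj_class C A c r2"
proof -
  have a1: "r1 \<in> cArr C" using am_arr[OF assms(2)] by blast
  have a2: "r2 \<in> cArr C" using am_arr[OF assms(3)] by blast
  have "\<And>r'. r' \<in> adm_monos C A c \<Longrightarrow>
     (factors_through C r1 r' \<and> factors_through C r' r1) = (factors_through C r2 r' \<and> factors_through C r' r2)"
  proof -
    fix r' assume "r' \<in> adm_monos C A c"
    then have a3: "r' \<in> cArr C" by (rule am_arr[THEN conjunct1])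
    show "(factors_through C r1 r' \<and> factors_through C r' r1) = (factors_through C r2 r' \<and> factors_through C r' r2)"
      using ft_trans[OF assms(1) a1 a2 a3] ft_trans[OF assms(1) a2 a1 a3] ft_trans[OF assms(1) a3 a1 a2]
        ft_trans[OF assms(1) a3 a2 a1] assms(4,5) by blast
  qed
  note eq = this
  show ?thesis unfolding subobj_class_def
  proof (rule set_eqI)
    fix x
    show "x \<in> {r' \<in> adm_monos C A c. factors_through C r1 r' \<and> factors_through C r' r1} \<longleftrightarrow>
          x \<in> {r' \<in> adm_monos C A c. factors_through C r2 r' \<and> factors_through C r' r2}"
      using eq[of x] by blast
  qed
qed

lemma class_eqD:
  assumes "is_category C" "r1 \<in> adm_monos C A c"
    "subobj_class C A c r1 = subobj_class C A c r2"
  shows "factors_through C r1 r2 \<and> factors_through C r2 r1"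
  using class_self[OF assms(1,2)] assms(3) unfolding subobj_class_def by auto

lemma ft_functor:
  assumes "is_functor C D Fo Fm" "r \<in> cArr C" "r' \<in> cArr C" "factors_through C r r'"
  shows "factors_through D (Fm r) (Fm r')"
proof -
  obtain k where k: "hom C (cDom C r) (cDom C r') k" "cComp C r' k = r"
    using assms(4) unfolding factors_through_def by blast
  have "k \<in> cArr C" using k unfolding hom_def by blast
  then have "hom D (Fo (cDom C k)) (Fo (cCod C k)) (Fm k)"
    using assms(1) unfolding is_functor_def by blast
  moreover have "Fm r = cComp D (Fm r') (Fm k)"
  proof -
    have "k \<in> cArr C" "cCod C k = cDom C r'" using k unfolding hom_def by auto
    then have "Fm (cComp C r' k) = cComp D (Fm r') (Fm k)" using assms(1,3) unfolding is_functor_def by blast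
    then show ?thesis using k by simp
  qed
  moreover have "hom D (Fo (cDom C r)) (Fo (cCod C r)) (Fm r)" "hom D (Fo (cDom C r')) (Fo (cCod C r')) (Fm r')"
    using assms(1-3) unfolding is_functor_def by blast+
  ultimately show ?thesis using k unfolding factors_through_def hom_def by auto
qed

lemma ft_cart:
  assumes "is_functor C D Fo Fm" "cartesian C D Fo Fm r'" "r \<in> cArr C"
    "cCod C r = cCod C r'" "factors_through D (Fm r) (Fm r')"
  shows "factors_through C r r'"
proof -
  have r': "r' \<in> cArr C" using assms(2) unfolding cartesian_def by blast
  obtain h where h: "hom D (cDom D (Fm r)) (cDom D (Fm r')) h" "cComp D (Fm r') h = Fm r"
    using assms(5) unfolding factors_through_def by blast
  have "cDom D (Fm r) = Fo (cDom C r)" "cDom D (Fm r') = Fo (cDom C r')"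
    using assms(1,3) r' unfolding is_functor_def hom_def by auto
  moreover have allf: "\<forall>a' h. a' \<in> cArr C \<and> cCod C a' = cCod C r' \<and>
        hom D (Fo (cDom C a')) (Fo (cDom C r')) h \<and> cComp D (Fm r') h = Fm a' \<longrightarrow>
        (\<exists>!k. hom C (cDom C a') (cDom C r') k \<and> cComp C r' k = a' \<and> Fm k = h)"
    using assms(2) unfolding cartesian_def by blast
  ultimately have "\<exists>!k. hom C (cDom C r) (cDom C r') k \<and> cComp C r' k = r \<and> Fm k = h"
    using allf[rule_format, of r h] assms(3,4) h by simp
  then obtain k where "hom C (cDom C r) (cDom C r') k \<and> cComp C r' k = r" by blast
  then show ?thesis unfolding factors_through_def by blast
qed

lemma cart_unique:
  assumes F: "is_functor C D Fo Fm" and ca: "cartesian C D Fo Fm a"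
    and k1: "hom C x (cDom C a) k1" and k2: "hom C x (cDom C a) k2"
    and e: "cComp C a k1 = cComp C a k2" and eF: "Fm k1 = Fm k2"
    and cat: "is_category C"
  shows "k1 = k2"
proof -
  have aarr: "a \<in> cArr C" using ca unfolding cartesian_def by blast
  have k1a: "k1 \<in> cArr C" "cCod C k1 = cDom C a" "cDom C k1 = x" using k1 unfolding hom_def by auto
  have k2a: "k2 \<in> cArr C" "cCod C k2 = cDom C a" "cDom C k2 = x" using k2 unfolding hom_def by auto
  have hc: "hom C x (cCod C a) (cComp C a k1)" using comp_hom[OF cat k1a(1) aarr k1a(2)] k1a(3) by simp
  have FkD: "hom D (Fo x) (Fo (cDom C a)) (Fm k1)"
    using F k1a unfolding is_functor_def by metis
  have FF: "Fm (cComp C a k1) = cComp D (Fm a) (Fm k1)"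
    using F k1a aarr unfolding is_functor_def by blast
  have U: "\<exists>!k. hom C (cDom C (cComp C a k1)) (cDom C a) k \<and> cComp C a k = cComp C a k1 \<and> Fm k = Fm k1"
  proof -
    have "cComp C a k1 \<in> cArr C" "cCod C (cComp C a k1) = cCod C a" "cDom C (cComp C a k1) = x"
      using hc unfolding hom_def by auto
    moreover have allf: "\<forall>a' h. a' \<in> cArr C \<and> cCod C a' = cCod C a \<and>
        hom D (Fo (cDom C a')) (Fo (cDom C a)) h \<and> cComp D (Fm a) h = Fm a' \<longrightarrow>
        (\<exists>!k. hom C (cDom C a') (cDom C a) k \<and> cComp C a k = a' \<and> Fm k = h)"
      using ca unfolding cartesian_def by blast
    ultimately show ?thesis using allf[rule_format, of "cComp C a k1" "Fm k1"] FkD FF by simp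
  qed
  have "cDom C (cComp C a k1) = x" using hc unfolding hom_def by auto
  then show ?thesis using U k1 k2 e eF by auto
qed

theorem proposition4p1p11:
  fixes C :: "('o,'m) cat" and D :: "('p,'n) cat"
    and AD :: "'n set" and Fo :: "'o \<Rightarrow> 'p" and Fm :: "'m \<Rightarrow> 'n" and c :: 'o
  assumes "is_category C" and "is_category D"
    and "admissibility_structure D AD"
    and "\<forall>m\<in>AD. mono D m"
    and "admissibility_fibration C D AD Fo Fm"
    and "c \<in> cObj C"
  defines "AC \<equiv> induced_admissible C D AD Fo Fm"
  shows "(\<forall>r\<in>adm_monos C AC c. Fm r \<in> adm_monos D AD (Fo c)) \<and>
         (\<forall>r\<in>adm_monos C AC c. \<forall>r'\<in>adm_monos C AC c.
            subobj_class C AC c r = subobj_class C AC c r' \<longrightarrow>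
            subobj_class D AD (Fo c) (Fm r) = subobj_class D AD (Fo c) (Fm r')) \<and>
         bij_betw (\<lambda>S. subobj_class D AD (Fo c) (Fm (SOME r. r \<in> S)))
           (adm_subobjects C AC c) (adm_subobjects D AD (Fo c))"
proof -
  have F: "is_functor C D Fo Fm" using assms(5) unfolding admissibility_fibration_def by blast
  have P1: "\<forall>r\<in>adm_monos C AC c. Fm r \<in> adm_monos D AD (Fo c)"
  proof
    fix r assume r: "r \<in> adm_monos C AC c"
    then have "Fm r \<in> AD" "r \<in> cArr C" "cCod C r = c"
      using am_arr[OF r] unfolding AC_def induced_admissible_def by auto
    moreover have "cCod D (Fm r) = Fo c" using F calculation unfolding is_functor_def hom_def by auto
    ultimately show "Fm r \<in> adm_monos D AD (Fo c)" using assms(4) unfolding adm_monos_def by auto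
  qed
  have P2: "\<And>r r'. r\<in>adm_monos C AC c \<Longrightarrow> r'\<in>adm_monos C AC c \<Longrightarrow>
            subobj_class C AC c r = subobj_class C AC c r' \<Longrightarrow>
            subobj_class D AD (Fo c) (Fm r) = subobj_class D AD (Fo c) (Fm r')"
  proof -
    fix r r' assume r: "r\<in>adm_monos C AC c" and r': "r'\<in>adm_monos C AC c"
      and e: "subobj_class C AC c r = subobj_class C AC c r'"
    have "factors_through C r r' \<and> factors_through C r' r" using class_eqD[OF assms(1) r e] .
    then have "factors_through D (Fm r) (Fm r') \<and> factors_through D (Fm r') (Fm r)"
      using ft_functor[OF F] am_arr[OF r] am_arr[OF r'] by blast
    then show "subobj_class D AD (Fo c) (Fm r) = subobj_class D AD (Fo c) (Fm r')"
      using class_eq[OF assms(2)] P1 r r' by blast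
  qed
  have SOMEr: "\<And>r. r \<in> adm_monos C AC c \<Longrightarrow>
     subobj_class D AD (Fo c) (Fm (SOME x. x \<in> subobj_class C AC c r)) = subobj_class D AD (Fo c) (Fm r)"
  proof -
    fix r assume r: "r \<in> adm_monos C AC c"
    define s where "s = (SOME x. x \<in> subobj_class C AC c r)"
    have "s \<in> subobj_class C AC c r" unfolding s_def using class_self[OF assms(1) r] by (rule someI)
    then have s: "s \<in> adm_monos C AC c" "factors_through C r s" "factors_through C s r"
      unfolding subobj_class_def by auto
    have "subobj_class C AC c s = subobj_class C AC c r" using class_eq[OF assms(1) s(1) r s(3,2)] .
    then show "subobj_class D AD (Fo c) (Fm s) = subobj_class D AD (Fo c) (Fm r)"
      using P2 s(1) r by blast
  qed
  have inj: "inj_on (\<lambda>S. subobj_class D AD (Fo c) (Fm (SOME r. r \<in> S))) (adm_subobjects C AC c)"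
  proof (rule inj_onI)
    fix S T assume "S \<in> adm_subobjects C AC c" "T \<in> adm_subobjects C AC c"
      and e: "subobj_class D AD (Fo c) (Fm (SOME r. r \<in> S)) = subobj_class D AD (Fo c) (Fm (SOME r. r \<in> T))"
    then obtain r r' where r: "r \<in> adm_monos C AC c" "S = subobj_class C AC c r"
      and r': "r' \<in> adm_monos C AC c" "T = subobj_class C AC c r'"
      unfolding adm_subobjects_def by auto
    have e2: "subobj_class D AD (Fo c) (Fm r) = subobj_class D AD (Fo c) (Fm r')"
      using e SOMEr[OF r(1)] SOMEr[OF r'(1)] r(2) r'(2) by simp
    have "factors_through D (Fm r) (Fm r') \<and> factors_through D (Fm r') (Fm r)"
      using class_eqD[OF assms(2) _ e2] P1 r(1) by blast
    moreover have "cartesian C D Fo Fm r" "cartesian C D Fo Fm r'"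
      using am_arr[OF r(1)] am_arr[OF r'(1)] unfolding AC_def induced_admissible_def by auto
    ultimately have "factors_through C r r' \<and> factors_through C r' r"
      using ft_cart[OF F _ _ _] am_arr[OF r(1)] am_arr[OF r'(1)] by simp
    then show "S = T" using class_eq[OF assms(1) r(1) r'(1)] r(2) r'(2) by blast
  qed
  have surj: "(\<lambda>S. subobj_class D AD (Fo c) (Fm (SOME r. r \<in> S))) ` adm_subobjects C AC c
      = adm_subobjects D AD (Fo c)"
  proof
    show "(\<lambda>S. subobj_class D AD (Fo c) (Fm (SOME r. r \<in> S))) ` adm_subobjects C AC c
      \<subseteq> adm_subobjects D AD (Fo c)"
      using SOMEr P1 unfolding adm_subobjects_def by auto
  next
    show "adm_subobjects D AD (Fo c) \<subseteq> (\<lambda>S. subobj_class D AD (Fo c) (Fm (SOME r. r \<in> S))) ` adm_subobjects C AC c"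
    proof
      fix T assume "T \<in> adm_subobjects D AD (Fo c)"
      then obtain b where b: "b \<in> adm_monos D AD (Fo c)" "T = subobj_class D AD (Fo c) b"
        unfolding adm_subobjects_def by auto
      have bA: "b \<in> AD" "cCod D b = Fo c" "mono D b" using b(1) unfolding adm_monos_def by auto
      obtain a where a: "cartesian C D Fo Fm a" "cCod C a = c" "Fm a = b"
        using assms(5,6) bA unfolding admissibility_fibration_def by blast
      have aarr: "a \<in> cArr C" using a(1) unfolding cartesian_def by blast
      have "mono C a" unfolding mono_def
      proof (intro conjI aarr allI impI)
        fix g h assume gh: "g \<in> cArr C \<and> h \<in> cArr C \<and> cCod C g = cDom C a \<and> cCod C h = cDom C a \<and>
          cDom C g = cDom C h \<and> cComp C a g = cComp C a h"
        have k: "hom C (cDom C g) (cDom C a) g" "hom C (cDom C g) (cDom C a) h"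
          using gh unfolding hom_def by auto
        have FgD: "Fm g \<in> cArr D" "Fm h \<in> cArr D" "cCod D (Fm g) = cDom D b" "cCod D (Fm h) = cDom D b"
           "cDom D (Fm g) = cDom D (Fm h)"
          using F gh aarr a(3) unfolding is_functor_def hom_def by auto
        have ag0: "Fm (cComp C a g) = cComp D (Fm a) (Fm g)" "Fm (cComp C a h) = cComp D (Fm a) (Fm h)"
          using F gh aarr unfolding is_functor_def by blast+
        have ag: "cComp D b (Fm g) = cComp D b (Fm h)"
          using ag0 a(3) gh by metis
        have "\<forall>g h. g \<in> cArr D \<and> h \<in> cArr D \<and> cCod D g = cDom D b \<and> cCod D h = cDom D b \<and>
          cDom D g = cDom D h \<and> cComp D b g = cComp D b h \<longrightarrow> g = h"
          using bA(3) unfolding mono_def by blast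
        then have "Fm g = Fm h" using FgD ag by blast
        then show "g = h" using cart_unique[OF F a(1) k(1) k(2) _ _ assms(1)] gh by blast
      qed
      then have am: "a \<in> adm_monos C AC c"
        using a bA unfolding adm_monos_def AC_def induced_admissible_def by auto
      show "T \<in> (\<lambda>S. subobj_class D AD (Fo c) (Fm (SOME r. r \<in> S))) ` adm_subobjects C AC c"
      proof (rule image_eqI)
        show "subobj_class C AC c a \<in> adm_subobjects C AC c" using am unfolding adm_subobjects_def by blast
        show "T = subobj_class D AD (Fo c) (Fm (SOME r. r \<in> subobj_class C AC c a))"
          using SOMEr[OF am] a(3) b(2) by simp
      qed
    qed
  qed
  have P2': "\<forall>r\<in>adm_monos C AC c. \<forall>r'\<in>adm_monos C AC c.
            subobj_class C AC c r = subobj_class C AC c r' \<longrightarrow>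
            subobj_class D AD (Fo c) (Fm r) = subobj_class D AD (Fo c) (Fm r')"
    using P2 by blast
  have B: "bij_betw (\<lambda>S. subobj_class D AD (Fo c) (Fm (SOME r. r \<in> S)))
           (adm_subobjects C AC c) (adm_subobjects D AD (Fo c))"
    unfolding bij_betw_def using inj surj by (rule conjI)
  show ?thesis using P1 P2' B by (intro conjI)
qed

end
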